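(* Let $\alpha\in(0,1)$ be Diophantine of order $\mu$ for some $\mu\geq2$, i.e. $\alpha$ is irrational and there exists $\varepsilon>0$ such that $|\alpha-p/q|>\varepsilon q^{-\mu}$ for every rational number $p/q$ (with $q\geq1$). Then there is a constant $C>0$ depending on $\alpha$ such that for all integers $n\geq1$, $$\frac{n^2\log n}{2}-n^2\leq e_n(\alpha)\leq\frac{n^2\log n}{2}+9n^2+Cn.$$
   Context: Let $\Delta^2$ be the closed unit bidisk in $\mathbb{C}^2$, $\mathcal{P}_n$ the space of polynomials $P\in\mathbb{C}[z,w]$ of total degree at most $n$, $K=\{(e^z,e^{\alpha z}):\ |z|\leq1\}$, $\|P\|_A=\sup_A|P|$, $E_n(\alpha)=\sup\{\|P\|_{\Delta^2}:\ P\in\mathcal{P}_n,\ \|P\|_K\leq1\}$ and $e_n(\alpha)=\log E_n(\alpha)$. *)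

theory Defs
  imports "HOL-Analysis.Analysis"
begin

text \<open>A polynomial in two complex variables of total degree at most n, given by its
  coefficient family c (only coefficients c i j with i + j \<le> n matter).\<close>
definition poly2 :: "nat \<Rightarrow> (nat \<Rightarrow> nat \<Rightarrow> complex) \<Rightarrow> complex \<Rightarrow> complex \<Rightarrow> complex" where
  "poly2 n c z w = (\<Sum>i\<le>n. \<Sum>j\<le>n - i. c i j * z ^ i * w ^ j)"

text \<open>Sup norm on K = {(e^z, e^(alpha z)) : |z| \<le> 1}.\<close>
definition normK :: "real \<Rightarrow> nat \<Rightarrow> (nat \<Rightarrow> nat \<Rightarrow> complex) \<Rightarrow> real" where
  "normK \<alpha> n c = (SUP z \<in> cball (0::complex) 1.
       cmod (poly2 n c (exp z) (exp (complex_of_real \<alpha> * z))))"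

definition normBidisk :: "nat \<Rightarrow> (nat \<Rightarrow> nat \<Rightarrow> complex) \<Rightarrow> real" where
  "normBidisk n c = (SUP zw \<in> cball (0::complex) 1 \<times> cball (0::complex) 1.
       cmod (poly2 n c (fst zw) (snd zw)))"

definition E_n :: "nat \<Rightarrow> real \<Rightarrow> real" where
  "E_n n \<alpha> = (SUP c \<in> {c. normK \<alpha> n c \<le> 1}. normBidisk n c)"

definition e_n :: "nat \<Rightarrow> real \<Rightarrow> real" where
  "e_n n \<alpha> = ln (E_n n \<alpha>)"

definition diophantine_of_order :: "real \<Rightarrow> real \<Rightarrow> bool" where
  "diophantine_of_order \<alpha> \<mu> \<longleftrightarrow> \<alpha> \<notin> \<rat> \<and>
     (\<exists>\<epsilon>>0. \<forall>p q :: int. q \<ge> 1 \<longrightarrow> \<bar>\<alpha> - of_int p / of_int q\<bar> > \<epsilon> * (of_int q) powr (- \<mu>))"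

end

theory Submission
  imports Defs "HOL-Computational_Algebra.Polynomial"
begin

definition Sdd :: "('i \<Rightarrow> complex) \<Rightarrow> 'i set \<Rightarrow> nat \<Rightarrow> complex" where
  "Sdd l J m = (\<Sum>p\<in>J. l p ^ m / (\<Prod>q\<in>J-{p}. l p - l q))"

lemma Sdd_rec:
  assumes "finite J" "inj_on l J" "b \<in> J"
  shows "Sdd l J (Suc m) = l b * Sdd l J m + Sdd l (J - {b}) m"
proof -
  have "Sdd l J (Suc m) - l b * Sdd l J m
      = (\<Sum>p\<in>J. l p ^ m * (l p - l b) / (\<Prod>q\<in>J-{p}. l p - l q))"
    unfolding Sdd_def by (simp add: sum_distrib_left sum_subtractf[symmetric] algebra_simps diff_divide_distrib)
  also have "\<dots> = (\<Sum>p\<in>J-{b}. l p ^ m * (l p - l b) / (\<Prod>q\<in>J-{p}. l p - l q))"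
    using assms by (subst sum.remove[of _ b]) auto
  also have "\<dots> = (\<Sum>p\<in>J-{b}. l p ^ m / (\<Prod>q\<in>(J-{b})-{p}. l p - l q))"
  proof (rule sum.cong[OF refl])
    fix p assume p: "p \<in> J - {b}"
    have ne: "l p - l b \<noteq> 0" using assms p by (auto simp: inj_on_def)
    have "(\<Prod>q\<in>J-{p}. l p - l q) = (l p - l b) * (\<Prod>q\<in>(J-{p})-{b}. l p - l q)"
      using assms p by (subst prod.remove[of _ b]) auto
    also have "(J-{p})-{b} = (J-{b})-{p}" by auto
    finally show "l p ^ m * (l p - l b) / (\<Prod>q\<in>J-{p}. l p - l q) = l p ^ m / (\<Prod>q\<in>(J-{b})-{p}. l p - l q)"
      using ne by simp
  qed
  finally show ?thesis unfolding Sdd_def by (simp add: algebra_simps)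
qed

lemma Sdd_single: "Sdd l {a} m = l a ^ m"
  by (simp add: Sdd_def)

lemma Sdd_zero_aux:
  "\<forall>J. finite J \<longrightarrow> inj_on l J \<longrightarrow> card J = Suc (Suc k) \<longrightarrow> Sdd l J 0 = 0"
proof (induction k)
  case 0
  show ?case
  proof (intro allI impI)
    fix J assume J: "finite J" "inj_on l J" "card J = Suc (Suc 0)"
    then obtain a b where ab: "J = {a,b}" "a \<noteq> b" by (auto simp: card_Suc_eq)
    have ne: "l a - l b \<noteq> 0" using J ab by (auto simp: inj_on_def)
    have e1: "{a,b}-{b} = {a}" "{a,b}-{a} = {b}" using ab by auto
    have "Sdd l J 0 = 1 / (l a - l b) + 1 / (l b - l a)"
      unfolding ab(1) Sdd_def using ab(2) by (simp add: e1)
    also have "\<dots> = 0" using ne by (simp add: field_simps)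
    finally show "Sdd l J 0 = 0" .
  qed
next
  case (Suc k)
  show ?case
  proof (intro allI impI)
    fix J assume J: "finite J" "inj_on l J" "card J = Suc (Suc (Suc k))"
    obtain a where a: "a \<in> J" using J(3) by (metis card.empty ex_in_conv nat.simps(3))
    have "card (J - {a}) = Suc (Suc k)" using J a by simp
    then obtain b where "b \<in> J - {a}" by (metis card.empty ex_in_conv nat.simps(3))
    then have ab: "a \<in> J" "b \<in> J" "a \<noteq> b" using a by auto
    have la: "l a \<noteq> l b" using J ab by (auto simp: inj_on_def)
    have z1: "Sdd l (J-{a}) 0 = 0" "Sdd l (J-{b}) 0 = 0"
      using Suc.IH J ab by (simp_all add: inj_on_diff)
    have "Sdd l J (Suc 0) = l b * Sdd l J 0 + Sdd l (J-{b}) 0"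
      by (rule Sdd_rec) (use J ab in auto)
    moreover have "Sdd l J (Suc 0) = l a * Sdd l J 0 + Sdd l (J-{a}) 0"
      by (rule Sdd_rec) (use J ab in auto)
    ultimately have "(l b - l a) * Sdd l J 0 = 0" using z1 by (simp add: algebra_simps del: mult_eq_0_iff) (metis mult_cancel_right)
    then show "Sdd l J 0 = 0" using la by simp
  qed
qed

lemma Sdd_zero:
  assumes "finite J" "inj_on l J" "card J \<ge> 2"
  shows "Sdd l J 0 = 0"
proof -
  obtain k where "card J = Suc (Suc k)" using assms(3)
    by (metis add_2_eq_Suc le_iff_add)
  then show ?thesis using Sdd_zero_aux assms by blast
qed

lemma Sdd_bound:
  assumes "finite J" "J \<noteq> {}" "inj_on l J" "\<forall>p\<in>J. norm (l p) \<le> R" "0 \<le> R"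
  shows "norm (Sdd l J m) \<le> real (m choose (card J - 1)) * R ^ (m - (card J - 1))"
  using assms(1-4)
proof (induction m arbitrary: J)
  case 0
  show ?case
  proof (cases "card J = 1")
    case True
    then obtain a where "J = {a}" by (auto simp: card_Suc_eq)
    then show ?thesis by (simp add: Sdd_single)
  next
    case False
    moreover have "card J > 0" using "0.prems" by (simp add: card_gt_0_iff)
    ultimately have "card J \<ge> 2" by linarith
    then have "Sdd l J 0 = 0" using Sdd_zero "0.prems" by blast
    then show ?thesis by simp
  qed
next
  case (Suc m)
  show ?case
  proof (cases "card J = 1")
    case True
    then obtain a where a: "J = {a}" by (auto simp: card_Suc_eq)
    have "norm (l a ^ Suc m) \<le> R ^ Suc m"
      unfolding norm_power using Suc.prems a by (intro power_mono) auto
    then show ?thesis using a by (simp add: Sdd_single)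
  next
    case False
    moreover have "card J > 0" using Suc.prems by (simp add: card_gt_0_iff)
    ultimately have c2: "card J \<ge> 2" by linarith
    obtain b where b: "b \<in> J" using Suc.prems by auto
    define K where "K = card J - 1"
    have K1: "K \<ge> 1" using c2 K_def by simp
    have cJb: "card (J - {b}) - 1 = K - 1" using b Suc.prems K_def by simp
    have IH1: "norm (Sdd l J m) \<le> real (m choose K) * R ^ (m - K)"
      using Suc.IH[of J] Suc.prems K_def by simp
    have IH2: "norm (Sdd l (J - {b}) m) \<le> real (m choose (K - 1)) * R ^ (m - (K - 1))"
    proof -
      have "card (J - {b}) \<ge> 1" using c2 b Suc.prems by simp
      then have "J - {b} \<noteq> {}" by (metis card.empty not_one_le_zero)
      then show ?thesis using Suc.IH[of "J - {b}"] Suc.prems cJb by (simp add: inj_on_diff)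
    qed
    have "norm (Sdd l J (Suc m)) \<le> norm (l b) * norm (Sdd l J m) + norm (Sdd l (J - {b}) m)"
      using Sdd_rec[OF Suc.prems(1) Suc.prems(3) b, of m]
      by (metis norm_mult norm_triangle_ineq)
    also have "\<dots> \<le> R * (real (m choose K) * R ^ (m - K)) + real (m choose (K - 1)) * R ^ (m - (K - 1))"
      using IH1 IH2 Suc.prems(4) b assms(5)
      by (intro add_mono mult_mono) auto
    also have "\<dots> \<le> real (Suc m choose K) * R ^ (Suc m - K)"
    proof (cases "m < K - 1")
      case True
      then show ?thesis by (simp add: binomial_eq_0)
    next
      case False
      obtain K' where K': "K = Suc K'" using K1 by (cases K) auto
      show ?thesis
      proof (cases "m = K'")
        case True
        then show ?thesis using K' by (simp add: binomial_eq_0)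
      next
        case False2: False
        then have mK: "m \<ge> K" using False K' by simp
        have e1: "R * R ^ (m - K) = R ^ (Suc m - K)" using mK
          by (simp add: Suc_diff_le)
        have e2: "m - (K - 1) = Suc m - K" using mK K' by simp
        have "Suc m choose K = (m choose K') + (m choose K)" using K' by simp
        then show ?thesis using e1 e2 K' by (simp add: algebra_simps) (metis mult.left_commute order_refl)
      qed
    qed
    finally show ?thesis unfolding K_def .
  qed
qed

lemma exp_partial_le:
  fixes x :: real assumes "0 \<le> x"
  shows "(\<Sum>n\<le>k. x ^ n / fact n) \<le> exp x"
  using assms summable_exp_generic[of x]
  by (auto simp: exp_def divide_inverse ac_simps intro!: sum_le_suminf)

lemma pow_div_fact_le_exp:
  fixes x :: real assumes "0 \<le> x"
  shows "x ^ k / fact k \<le> exp x"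
proof -
  have "x ^ k / fact k \<le> (\<Sum>n\<le>k. x ^ n / fact n)"
    using assms by (intro member_le_sum) auto
  also have "\<dots> \<le> exp x" by (rule exp_partial_le[OF assms])
  finally show ?thesis .
qed

lemma poly_sum_le_degree:
  fixes p :: "complex poly"
  assumes "degree p \<le> N"
  shows "poly p x = (\<Sum>i\<le>N. coeff p i * x ^ i)"
proof -
  have "poly p x = (\<Sum>i\<le>degree p. coeff p i * x ^ i)" by (rule poly_altdef)
  also have "\<dots> = (\<Sum>i\<le>N. coeff p i * x ^ i)"
    by (rule sum.mono_neutral_left) (use assms le_degree in auto)
  finally show ?thesis .
qed

lemma linprod_degree:
  assumes "finite J"
  shows "degree (\<Prod>p\<in>J. [:- l p, 1:]) \<le> card J"
proof -
  have "degree (\<Prod>p\<in>J. [:- l p, 1:]) \<le> sum (degree \<circ> (\<lambda>p. [:- l p, 1:])) J"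
    by (rule degree_prod_sum_le[OF assms])
  also have "\<dots> = card J" by simp
  finally show ?thesis .
qed

lemma linprod_coeff_bound:
  fixes l :: "'i \<Rightarrow> complex"
  assumes "finite J" "\<forall>p\<in>J. norm (l p) \<le> R" "0 \<le> R"
  shows "norm (coeff (\<Prod>p\<in>J. [:- l p, 1:]) t) \<le> real (card J choose t) * R ^ (card J - t)"
  using assms(1,2)
proof (induction J arbitrary: t rule: finite_induct)
  case empty
  then show ?case by (cases t) auto
next
  case (insert y J)
  let ?P = "\<Prod>p\<in>J. [:- l p, 1:]"
  have eq: "(\<Prod>p\<in>insert y J. [:- l p, 1:]) = smult (- l y) ?P + pCons 0 ?P"
    using insert by simp
  have ly: "norm (l y) \<le> R" using insert by simp
  have IH: "\<And>t. norm (coeff ?P t) \<le> real (card J choose t) * R ^ (card J - t)"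
    using insert by simp
  show ?case
  proof (cases t)
    case 0
    have "norm (coeff (smult (- l y) ?P + pCons 0 ?P) 0) = norm (l y) * norm (coeff ?P 0)"
      by (simp add: norm_mult)
    also have "\<dots> \<le> R * (real (card J choose 0) * R ^ (card J - 0))"
      using IH[of 0] ly assms(3) by (intro mult_mono) auto
    finally show ?thesis using 0 eq insert by simp
  next
    case (Suc t')
    have "norm (coeff (smult (- l y) ?P + pCons 0 ?P) (Suc t'))
        \<le> norm (l y) * norm (coeff ?P (Suc t')) + norm (coeff ?P t')"
    proof -
      have "coeff (smult (- l y) ?P + pCons 0 ?P) (Suc t') = (- l y) * coeff ?P (Suc t') + coeff ?P t'"
        by simp
      then have "norm (coeff (smult (- l y) ?P + pCons 0 ?P) (Suc t'))
          \<le> norm ((- l y) * coeff ?P (Suc t')) + norm (coeff ?P t')"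
        by (simp only:) (rule norm_triangle_ineq)
      then show ?thesis by (simp add: norm_mult)
    qed
    also have "\<dots> \<le> R * (real (card J choose Suc t') * R ^ (card J - Suc t'))
        + real (card J choose t') * R ^ (card J - t')"
      using IH[of "Suc t'"] IH[of t'] ly assms(3) by (intro add_mono mult_mono) auto
    also have "\<dots> \<le> real (Suc (card J) choose Suc t') * R ^ (Suc (card J) - Suc t')"
    proof (cases "t' < card J")
      case True
      have "R * R ^ (card J - Suc t') = R ^ (card J - t')" using True
        by (metis Suc_diff_Suc power_Suc)
      then show ?thesis by (simp add: algebra_simps) (metis mult.left_commute order_refl)
    next
      case False
      then show ?thesis by (simp add: binomial_eq_0)
    qed
    finally show ?thesis using Suc eq insert by simp
  qed
qed

definition omg :: "nat \<Rightarrow> complex" where "omg M = cis (2 * pi / real M)"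

lemma omg_pow: "omg M ^ e = cis (2 * pi * real e / real M)"
  unfolding omg_def by (subst Complex.DeMoivre) (simp add: field_simps)

lemma norm_omg_pow [simp]: "norm (omg M ^ r) = 1"
  by (simp add: omg_pow)

lemma omg_pow_eq_1:
  assumes "M > 0"
  shows "omg M ^ e = 1 \<longleftrightarrow> M dvd e"
proof
  assume "M dvd e"
  then obtain k where "e = M * k" by auto
  then have "2 * pi * real e / real M = 2 * pi * real k" using assms by simp
  then show "omg M ^ e = 1" by (simp add: omg_pow)
next
  assume h: "omg M ^ e = 1"
  then have "cos (2 * pi * real e / real M) = 1"
    by (simp add: omg_pow complex_eq_iff)
  then obtain m :: int where m: "2 * pi * real e / real M = real_of_int m * 2 * pi"
    by (auto simp: cos_one_2pi_int)
  then have "real e = real_of_int m * real M" using assms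
    by (simp add: field_simps)
  then have "int e = m * int M" by (metis of_int_eq_iff of_int_mult of_int_of_nat_eq)
  then have "int M dvd int e" by simp
  then show "M dvd e" by simp
qed

lemma ru_sum:
  assumes "M > 0"
  shows "(\<Sum>r<M. omg M ^ (r * e)) = (if M dvd e then of_nat M else 0)"
proof -
  have "(\<Sum>r<M. omg M ^ (r * e)) = (\<Sum>r<M. (omg M ^ e) ^ r)"
    by (simp add: mult.commute[of _ e] power_mult)
  also have "\<dots> = (if omg M ^ e = 1 then of_nat M else (1 - (omg M ^ e) ^ M) / (1 - omg M ^ e))"
    by (rule sum_gp_strict)
  also have "(omg M ^ e) ^ M = 1"
  proof -
    have "(omg M ^ e) ^ M = (omg M ^ M) ^ e" by (simp only: power_mult[symmetric] mult.commute)
    also have "omg M ^ M = 1" using omg_pow_eq_1[OF assms, of M] by simp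
    finally show ?thesis by simp
  qed
  finally show ?thesis using omg_pow_eq_1[OF assms] by simp
qed

lemma ru_avg:
  fixes b :: "nat \<Rightarrow> complex"
  assumes "M > 0" "m < M"
  shows "(\<Sum>r<M. (\<Sum>s<M. b s * omg M ^ (r * s)) * omg M ^ (r * (M - m))) = of_nat M * b m"
proof -
  have "(\<Sum>r<M. (\<Sum>s<M. b s * omg M ^ (r * s)) * omg M ^ (r * (M - m)))
      = (\<Sum>s<M. b s * (\<Sum>r<M. omg M ^ (r * (s + (M - m)))))"
  proof -
    have "(\<Sum>r<M. (\<Sum>s<M. b s * omg M ^ (r * s)) * omg M ^ (r * (M - m)))
        = (\<Sum>r<M. \<Sum>s<M. b s * omg M ^ (r * (s + (M - m))))"
      by (simp add: sum_distrib_right power_add distrib_left mult.assoc)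
    also have "\<dots> = (\<Sum>s<M. \<Sum>r<M. b s * omg M ^ (r * (s + (M - m))))"
      by (rule sum.swap)
    also have "\<dots> = (\<Sum>s<M. b s * (\<Sum>r<M. omg M ^ (r * (s + (M - m)))))"
      by (simp add: sum_distrib_left)
    finally show ?thesis .
  qed
  also have "\<dots> = (\<Sum>s<M. b s * (if s = m then of_nat M else 0))"
  proof (rule sum.cong[OF refl])
    fix s assume s: "s \<in> {..<M}"
    have "M dvd (s + (M - m)) \<longleftrightarrow> s = m"
    proof
      assume d: "M dvd (s + (M - m))"
      have "s + (M - m) > 0" "s + (M - m) < 2 * M" using s assms by auto
      obtain k where k: "s + (M - m) = M * k" using d by auto
      have "M * k < M * 2" using k \<open>s + (M - m) < 2 * M\<close> by (simp add: mult.commute)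
      then have "k < 2" using assms by simp
      moreover have "k \<noteq> 0" using k \<open>s + (M - m) > 0\<close> by auto
      ultimately have "k = 1" by linarith
      then have "s + (M - m) = M" using k by simp
      then show "s = m" using assms s by simp
    qed (use assms in auto)
    then show "b s * (\<Sum>r<M. omg M ^ (r * (s + (M - m)))) = b s * (if s = m then of_nat M else 0)"
      using ru_sum[OF assms(1)] by simp
  qed
  also have "\<dots> = of_nat M * b m" using assms by (simp add: if_distrib cong: if_cong)
  finally show ?thesis .
qed

lemma taylor_sum:
  fixes d l :: "'i \<Rightarrow> complex"
  assumes "finite I" "\<forall>p\<in>I. norm (l p) \<le> R" "norm \<zeta> \<le> 1"
  shows "norm ((\<Sum>p\<in>I. d p * exp (l p * \<zeta>)) - (\<Sum>s\<le>K. (\<Sum>p\<in>I. d p * l p ^ s / fact s) * \<zeta> ^ s))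
         \<le> (\<Sum>p\<in>I. norm (d p)) * (exp R * R ^ Suc K / fact K)"
proof -
  have "(\<Sum>s\<le>K. (\<Sum>p\<in>I. d p * l p ^ s / fact s) * \<zeta> ^ s)
      = (\<Sum>p\<in>I. d p * (\<Sum>s\<le>K. (l p * \<zeta>) ^ s / fact s))"
    by (simp add: sum_distrib_left sum_distrib_right sum.swap[of _ I] power_mult_distrib
        algebra_simps)
  then have "(\<Sum>p\<in>I. d p * exp (l p * \<zeta>)) - (\<Sum>s\<le>K. (\<Sum>p\<in>I. d p * l p ^ s / fact s) * \<zeta> ^ s)
      = (\<Sum>p\<in>I. d p * (exp (l p * \<zeta>) - (\<Sum>s\<le>K. (l p * \<zeta>) ^ s / fact s)))"
    by (simp add: sum_subtractf right_diff_distrib)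
  also have "norm \<dots> \<le> (\<Sum>p\<in>I. norm (d p) * (exp R * R ^ Suc K / fact K))"
  proof (rule order_trans[OF norm_sum sum_mono])
    fix p assume p: "p \<in> I"
    have nz: "norm (l p * \<zeta>) \<le> R"
      using assms p by (simp add: norm_mult) (metis mult_le_cancel_left2 norm_ge_zero order_trans mult_left_le)
    have R0: "0 \<le> R" using nz norm_ge_zero order_trans by blast
    have "norm (exp (l p * \<zeta>) - (\<Sum>s\<le>K. (l p * \<zeta>) ^ s / fact s))
        \<le> exp (norm (l p * \<zeta>)) * norm (l p * \<zeta>) ^ Suc K / fact K"
      by (rule Taylor_exp_field)
    also have "\<dots> \<le> exp R * R ^ Suc K / fact K"
      using nz by (intro divide_right_mono mult_mono power_mono) auto
    finally show "norm (d p * (exp (l p * \<zeta>) - (\<Sum>s\<le>K. (l p * \<zeta>) ^ s / fact s)))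
        \<le> norm (d p) * (exp R * R ^ Suc K / fact K)"
      unfolding norm_mult by (rule mult_left_mono) auto
  qed
  also have "\<dots> = (\<Sum>p\<in>I. norm (d p)) * (exp R * R ^ Suc K / fact K)"
    by (rule sum_distrib_right[symmetric])
  finally show ?thesis .
qed

lemma pow_fact_tendsto_0: "(\<lambda>n. (x::real) ^ n / fact n) \<longlonglongrightarrow> 0"
  using summable_LIMSEQ_zero [OF summable_exp] by (auto simp add: inverse_eq_divide)

lemma cauchy_coeff:
  fixes d l :: "'i \<Rightarrow> complex"
  assumes I: "finite I" and lR: "\<forall>p\<in>I. norm (l p) \<le> R" and R0: "0 \<le> R"
    and bd: "\<And>\<zeta>. norm \<zeta> \<le> 1 \<Longrightarrow> norm (\<Sum>p\<in>I. d p * exp (l p * \<zeta>)) \<le> Bd"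
  shows "norm (\<Sum>p\<in>I. d p * l p ^ m / fact m) \<le> Bd"
proof -
  define a where "a s = (\<Sum>p\<in>I. d p * l p ^ s / fact s)" for s
  define D where "D = (\<Sum>p\<in>I. norm (d p))"
  define \<rho> where "\<rho> K = D * (exp R * R ^ Suc K / fact K)" for K
  have key: "norm (a m) \<le> Bd + \<rho> K" if K: "m \<le> K" for K
  proof -
    define M where "M = Suc K"
    have M0: "M > 0" and mM: "m < M" using K by (auto simp: M_def)
    define bb where "bb s = (if s \<le> K then a s else 0)" for s
    have P: "(\<Sum>s<M. bb s * \<zeta> ^ s) = (\<Sum>s\<le>K. a s * \<zeta> ^ s)" for \<zeta>
      unfolding M_def bb_def lessThan_Suc_atMost by simp
    have Pb: "norm (\<Sum>s<M. bb s * \<zeta> ^ s) \<le> Bd + \<rho> K" if z: "norm \<zeta> \<le> 1" for \<zeta>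
    proof -
      have "norm ((\<Sum>p\<in>I. d p * exp (l p * \<zeta>)) - (\<Sum>s\<le>K. a s * \<zeta> ^ s)) \<le> \<rho> K"
        using taylor_sum[OF I lR z, of d K] unfolding a_def \<rho>_def D_def .
      moreover have "norm (\<Sum>p\<in>I. d p * exp (l p * \<zeta>)) \<le> Bd" using bd z .
      ultimately have "norm (\<Sum>s\<le>K. a s * \<zeta> ^ s) \<le> Bd + \<rho> K"
        using norm_triangle_ineq2[of "\<Sum>s\<le>K. a s * \<zeta> ^ s" "\<Sum>p\<in>I. d p * exp (l p * \<zeta>)"]
          norm_minus_commute[of "\<Sum>s\<le>K. a s * \<zeta> ^ s" "\<Sum>p\<in>I. d p * exp (l p * \<zeta>)"]
        by linarith
      then show ?thesis using P by simp
    qed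
    have "of_nat M * bb m = (\<Sum>r<M. (\<Sum>s<M. bb s * omg M ^ (r * s)) * omg M ^ (r * (M - m)))"
      using ru_avg[OF M0 mM] by simp
    also have "\<dots> = (\<Sum>r<M. (\<Sum>s<M. bb s * (omg M ^ r) ^ s) * omg M ^ (r * (M - m)))"
      by (simp add: power_mult)
    finally have eq: "of_nat M * bb m = \<dots>" .
    have "real M * norm (bb m) \<le> (\<Sum>r<M. norm ((\<Sum>s<M. bb s * (omg M ^ r) ^ s) * omg M ^ (r * (M - m))))"
    proof -
      have "real M * norm (bb m) = norm (of_nat M * bb m)" by (simp add: norm_mult)
      also have "\<dots> = norm (\<Sum>r<M. (\<Sum>s<M. bb s * (omg M ^ r) ^ s) * omg M ^ (r * (M - m)))"
        by (simp only: eq)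
      also have "\<dots> \<le> (\<Sum>r<M. norm ((\<Sum>s<M. bb s * (omg M ^ r) ^ s) * omg M ^ (r * (M - m))))"
        by (rule norm_sum)
      finally show ?thesis .
    qed
    also have "\<dots> \<le> (\<Sum>r<M. Bd + \<rho> K)"
    proof (rule sum_mono)
      fix r assume "r \<in> {..<M}"
      have "norm ((\<Sum>s<M. bb s * (omg M ^ r) ^ s) * omg M ^ (r * (M - m)))
          = norm (\<Sum>s<M. bb s * (omg M ^ r) ^ s)"
        by (simp add: norm_mult)
      also have "\<dots> \<le> Bd + \<rho> K" by (rule Pb) simp
      finally show "norm ((\<Sum>s<M. bb s * (omg M ^ r) ^ s) * omg M ^ (r * (M - m))) \<le> Bd + \<rho> K" .
    qed
    also have "\<dots> = real M * (Bd + \<rho> K)" by simp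
    finally have "norm (bb m) \<le> Bd + \<rho> K" using M0 by simp
    then show ?thesis using K by (simp add: bb_def)
  qed
  have lim: "(\<lambda>K. Bd + \<rho> K) \<longlonglongrightarrow> Bd + 0"
  proof (rule tendsto_add[OF tendsto_const])
    have "(\<lambda>K. (D * exp R * R) * (R ^ K / fact K)) \<longlonglongrightarrow> (D * exp R * R) * 0"
      by (intro tendsto_mult tendsto_const pow_fact_tendsto_0)
    moreover have "\<rho> = (\<lambda>K. (D * exp R * R) * (R ^ K / fact K))"
      by (simp add: \<rho>_def fun_eq_iff)
    ultimately show "\<rho> \<longlonglongrightarrow> 0" by simp
  qed
  have "norm (a m) \<le> Bd + 0"
    by (rule LIMSEQ_le_const[OF lim]) (use key in blast)
  then show ?thesis by (simp add: a_def)
qed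

lemma coeff_extract:
  fixes d l :: "'i \<Rightarrow> complex"
  assumes I: "finite I" and p0: "p0 \<in> I" and lR: "\<forall>p\<in>I. norm (l p) \<le> R" and R0: "0 \<le> R"
    and a1: "\<And>t. norm (\<Sum>p\<in>I. d p * l p ^ t / fact t) \<le> 1"
  shows "norm (d p0 * (\<Prod>q\<in>I-{p0}. l p0 - l q)) \<le> real (card I) * fact (card I - 1) * exp R"
proof -
  define Q where "Q = (\<Prod>q\<in>I-{p0}. [:- l q, 1:])"
  define N where "N = card (I - {p0})"
  have NI: "N = card I - 1" using I p0 by (simp add: N_def)
  have "card I > 0" using I p0 by (auto simp: card_gt_0_iff)
  then have IN: "card I = Suc N" using NI by simp
  have polyQ: "poly Q x = (\<Prod>q\<in>I-{p0}. x - l q)" for x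
    by (simp add: Q_def poly_prod)
  have degQ: "degree Q \<le> N" unfolding Q_def N_def by (rule linprod_degree) (use I in simp)
  have "(\<Sum>p\<in>I. d p * poly Q (l p)) = d p0 * poly Q (l p0) + (\<Sum>p\<in>I-{p0}. d p * poly Q (l p))"
    using I p0 by (simp add: sum.remove)
  also have "(\<Sum>p\<in>I-{p0}. d p * poly Q (l p)) = 0"
  proof (rule sum.neutral, rule ballI)
    fix p assume p: "p \<in> I - {p0}"
    have "poly Q (l p) = 0" unfolding polyQ
      by (rule prod_zero) (use I p in auto)
    then show "d p * poly Q (l p) = 0" by simp
  qed
  finally have e1: "d p0 * (\<Prod>q\<in>I-{p0}. l p0 - l q) = (\<Sum>p\<in>I. d p * poly Q (l p))"
    by (simp add: polyQ)
  also have "\<dots> = (\<Sum>p\<in>I. d p * (\<Sum>t\<le>N. coeff Q t * l p ^ t))"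
    by (simp add: poly_sum_le_degree[OF degQ])
  also have "\<dots> = (\<Sum>t\<le>N. coeff Q t * (\<Sum>p\<in>I. d p * l p ^ t / fact t) * fact t)"
    by (simp add: sum_distrib_left sum_distrib_right sum.swap[of _ I] algebra_simps)
  finally have e2: "d p0 * (\<Prod>q\<in>I-{p0}. l p0 - l q) = \<dots>" .
  have "norm (\<Sum>t\<le>N. coeff Q t * (\<Sum>p\<in>I. d p * l p ^ t / fact t) * fact t)
      \<le> (\<Sum>t\<le>N. norm (coeff Q t * (\<Sum>p\<in>I. d p * l p ^ t / fact t) * fact t))"
    by (rule norm_sum)
  also have "\<dots> \<le> (\<Sum>t\<le>N. fact N * exp R)"
  proof (rule sum_mono)
    fix t assume t: "t \<in> {..N}"
    have cb: "norm (coeff Q t) \<le> real (N choose t) * R ^ (N - t)"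
      unfolding Q_def N_def by (rule linprod_coeff_bound) (use I lR R0 in auto)
    have "norm (coeff Q t * (\<Sum>p\<in>I. d p * l p ^ t / fact t) * fact t)
        = norm (coeff Q t) * norm (\<Sum>p\<in>I. d p * l p ^ t / fact t) * fact t"
      by (simp add: norm_mult)
    also have "\<dots> \<le> (real (N choose t) * R ^ (N - t)) * 1 * fact t"
      using cb a1[of t] R0 by (intro mult_mono) auto
    also have "\<dots> = fact N * (R ^ (N - t) / fact (N - t))"
    proof -
      have "fact t * fact (N - t) * real (N choose t) = (fact N :: real)"
        using binomial_fact_lemma[of t N] t by (metis atMost_iff of_nat_fact of_nat_mult)
      then show ?thesis by (simp add: field_simps)
    qed
    also have "\<dots> \<le> fact N * exp R"
      using pow_div_fact_le_exp[OF R0] by (intro mult_left_mono) auto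
    finally show "norm (coeff Q t * (\<Sum>p\<in>I. d p * l p ^ t / fact t) * fact t) \<le> fact N * exp R" .
  qed
  also have "\<dots> = real (card I) * fact (card I - 1) * exp R" using IN NI by simp
  finally show ?thesis using e2 by simp
qed

definition ndist :: "nat \<Rightarrow> nat \<Rightarrow> nat" where
  "ndist i j = (if i < j then j - i else i - j)"

lemma ndist_real: "real (ndist i j) = \<bar>real i - real j\<bar>"
  by (simp add: ndist_def of_nat_diff)

lemma prod_ndist:
  assumes "i0 \<le> L"
  shows "(\<Prod>i\<in>{..L}-{i0}. ndist i i0) = fact i0 * fact (L - i0)"
  using assms
proof (induction L rule: dec_induct)
  case base
  have "{..i0} - {i0} = {0..<i0}" by auto
  then have "(\<Prod>i\<in>{..i0}-{i0}. ndist i i0) = (\<Prod>i=0..<i0. i0 - i)"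
    by (auto simp: ndist_def intro!: prod.cong)
  also have "\<dots> = fact i0" by (simp add: fact_prod_rev)
  finally show ?case by simp
next
  case (step L)
  have "{..Suc L} - {i0} = insert (Suc L) ({..L} - {i0})" using step by auto
  then have "(\<Prod>i\<in>{..Suc L}-{i0}. ndist i i0) = ndist (Suc L) i0 * (\<Prod>i\<in>{..L}-{i0}. ndist i i0)"
    by simp
  also have "\<dots> = (Suc L - i0) * (fact i0 * fact (L - i0))"
    using step by (simp add: ndist_def)
  also have "\<dots> = fact i0 * fact (Suc L - i0)"
    using step by (simp add: Suc_diff_le algebra_simps)
  finally show ?case .
qed

lemma row_prod:
  fixes g :: "nat \<Rightarrow> real"
  assumes "i0 \<le> L" "\<And>i. i \<le> L \<Longrightarrow> i \<noteq> i0 \<Longrightarrow> g i \<ge> \<bar>real i - real i0\<bar> / 2"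
  shows "(\<Prod>i\<in>{..L}-{i0}. g i) \<ge> fact L / 4 ^ L"
proof -
  have cardL: "card ({..L} - {i0}) = L" using assms by simp
  have "(\<Prod>i\<in>{..L}-{i0}. g i) \<ge> (\<Prod>i\<in>{..L}-{i0}. real (ndist i i0) / 2)"
    using assms by (intro prod_mono) (auto simp: ndist_real)
  moreover have "(\<Prod>i\<in>{..L}-{i0}. real (ndist i i0) / 2) = real (fact i0 * fact (L - i0)) / 2 ^ L"
    using cardL by (simp add: prod_dividef prod_ndist[OF assms(1)] flip: of_nat_prod)
  moreover have "fact L / 4 ^ L \<le> real (fact i0 * fact (L - i0)) / 2 ^ L"
  proof -
    have "fact L = real (fact i0 * fact (L - i0)) * real (L choose i0)"
      using binomial_fact_lemma[of i0 L] assms(1) by (metis of_nat_fact of_nat_mult)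
    also have "\<dots> \<le> real (fact i0 * fact (L - i0)) * 2 ^ L"
      using binomial_le_pow2[of L i0] by (intro mult_left_mono) (auto simp flip: of_nat_power)
    finally have "fact L \<le> real (fact i0 * fact (L - i0)) * 2 ^ L" .
    then have "fact L / 4 ^ L \<le> real (fact i0 * fact (L - i0)) * 2 ^ L / 4 ^ L"
      by (intro divide_right_mono) auto
    also have "\<dots> = real (fact i0 * fact (L - i0)) / 2 ^ L"
      by (simp add: field_simps power_mult_distrib flip: power_mult_distrib)
    finally show ?thesis .
  qed
  ultimately show ?thesis by linarith
qed

definition Iset :: "nat \<Rightarrow> (nat \<times> nat) set" where
  "Iset n = Sigma {..n} (\<lambda>i. {..n - i})"

definition lam :: "real \<Rightarrow> nat \<times> nat \<Rightarrow> complex" where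
  "lam \<alpha> p = complex_of_real (real (fst p) + real (snd p) * \<alpha>)"

lemma finite_Iset [simp]: "finite (Iset n)"
  by (simp add: Iset_def)

lemma mem_Iset: "p \<in> Iset n \<longleftrightarrow> fst p + snd p \<le> n"
  by (cases p) (auto simp: Iset_def)

lemma poly2_Iset: "poly2 n c z w = (\<Sum>p\<in>Iset n. c (fst p) (snd p) * z ^ fst p * w ^ snd p)"
  unfolding poly2_def Iset_def by (subst sum.Sigma) (auto simp: split_def)

lemma poly2_exp:
  "poly2 n c (exp \<zeta>) (exp (complex_of_real \<alpha> * \<zeta>))
     = (\<Sum>p\<in>Iset n. c (fst p) (snd p) * exp (lam \<alpha> p * \<zeta>))"
  unfolding poly2_Iset
proof (rule sum.cong[OF refl])
  fix p :: "nat \<times> nat"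
  have "exp \<zeta> ^ fst p * exp (complex_of_real \<alpha> * \<zeta>) ^ snd p
      = exp (of_nat (fst p) * \<zeta>) * exp (of_nat (snd p) * (complex_of_real \<alpha> * \<zeta>))"
    by (simp add: exp_of_nat_mult)
  also have "\<dots> = exp (lam \<alpha> p * \<zeta>)"
    by (simp add: lam_def exp_add[symmetric] algebra_simps)
  finally show "c (fst p) (snd p) * exp \<zeta> ^ fst p * exp (complex_of_real \<alpha> * \<zeta>) ^ snd p
      = c (fst p) (snd p) * exp (lam \<alpha> p * \<zeta>)" by (simp add: mult.assoc)
qed

lemma sum_pow0:
  fixes f :: "nat \<Rightarrow> complex"
  shows "(\<Sum>j\<le>m. f j * 0 ^ j) = f 0"
proof -
  have "(\<Sum>j\<le>m. f j * 0 ^ j) = (\<Sum>j\<le>m. if j = 0 then f j else 0)"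
    by (rule sum.cong) (auto simp: power_0_left)
  also have "\<dots> = f 0" by (simp add: sum.delta)
  finally show ?thesis .
qed

lemma poly2_zero: "poly2 n c 0 0 = c 0 0"
proof -
  have "poly2 n c 0 0 = (\<Sum>i\<le>n. (\<Sum>j\<le>n - i. c i j * 0 ^ j) * 0 ^ i)"
    unfolding poly2_def by (simp add: sum_distrib_left sum_distrib_right mult_ac)
  also have "\<dots> = (\<Sum>i\<le>n. c i 0 * 0 ^ i)" by (simp add: sum_pow0)
  also have "\<dots> = c 0 0" by (rule sum_pow0)
  finally show ?thesis .
qed

lemma poly2_bidisk_bound:
  assumes "norm z \<le> 1" "norm w \<le> 1"
  shows "norm (poly2 n c z w) \<le> (\<Sum>p\<in>Iset n. norm (c (fst p) (snd p)))"
  unfolding poly2_Iset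
proof (rule order_trans[OF norm_sum sum_mono])
  fix p assume "p \<in> Iset n"
  have "norm (z ^ fst p) \<le> 1" "norm (w ^ snd p) \<le> 1"
    using assms by (simp_all add: norm_power power_le_one)
  then show "norm (c (fst p) (snd p) * z ^ fst p * w ^ snd p) \<le> norm (c (fst p) (snd p))"
    unfolding norm_mult by (metis mult.assoc mult_left_le norm_ge_zero mult_le_one)
qed

lemma card_Iset: "2 * card (Iset n) = (n + 1) * (n + 2)"
proof -
  have "card (Iset n) = (\<Sum>i\<le>n. Suc (n - i))"
    unfolding Iset_def by (subst card_SigmaI) auto
  moreover have "2 * (\<Sum>i\<le>n. Suc (n - i)) = (n + 1) * (n + 2)"
  proof (induction n)
    case 0 then show ?case by simp
  next
    case (Suc n)
    have "(\<Sum>i\<le>Suc n. Suc (Suc n - i)) = (\<Sum>i\<le>n. Suc (Suc n - i)) + 1" by simp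
    also have "(\<Sum>i\<le>n. Suc (Suc n - i)) = (\<Sum>i\<le>n. Suc (n - i) + 1)"
      by (rule sum.cong) (auto simp: Suc_diff_le)
    also have "\<dots> = (\<Sum>i\<le>n. Suc (n - i)) + (n + 1)"
      by (subst sum.distrib) simp
    finally show ?case using Suc by simp
  qed
  ultimately show ?thesis by simp
qed

lemma norm_lam:
  assumes "0 < \<alpha>" "\<alpha> < 1" "p \<in> Iset n"
  shows "norm (lam \<alpha> p) \<le> real n"
proof -
  have "real (snd p) * \<alpha> \<le> real (snd p)" using assms by (simp add: mult_left_le)
  moreover have "real (fst p) + real (snd p) \<le> real n" using assms(3) mem_Iset by (metis of_nat_add of_nat_le_iff)
  moreover have "0 \<le> real (fst p) + real (snd p) * \<alpha>" using assms by simp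
  ultimately show ?thesis using assms unfolding lam_def norm_of_real by linarith
qed

lemma dioph_bound:
  assumes "diophantine_of_order \<alpha> \<mu>" "\<mu> \<ge> 1"
  obtains e where "0 < e" "e \<le> 1"
    "\<And>n p q. 1 \<le> \<bar>q\<bar> \<Longrightarrow> \<bar>q\<bar> \<le> int n \<Longrightarrow>
        \<bar>real_of_int p + real_of_int q * \<alpha>\<bar> \<ge> e * real n powr (1 - \<mu>)"
proof -
  obtain \<epsilon> where \<epsilon>: "\<epsilon> > 0"
    "\<And>p q :: int. q \<ge> 1 \<Longrightarrow> \<bar>\<alpha> - of_int p / of_int q\<bar> > \<epsilon> * (of_int q) powr (- \<mu>)"
    using assms(1) unfolding diophantine_of_order_def by blast
  define e where "e = min \<epsilon> 1"
  have pos: "\<bar>real_of_int p + real_of_int q * \<alpha>\<bar> \<ge> e * real n powr (1 - \<mu>)"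
    if q: "q \<ge> 1" "q \<le> int n" for n p q
  proof -
    have qr: "real_of_int q \<ge> 1" using q by simp
    have "\<bar>\<alpha> - of_int (-p) / of_int q\<bar> > \<epsilon> * (of_int q) powr (- \<mu>)" using \<epsilon>(2) q by blast
    then have "real_of_int q * \<bar>\<alpha> - of_int (-p) / of_int q\<bar> > real_of_int q * (\<epsilon> * (of_int q) powr (- \<mu>))"
      using qr by (intro mult_strict_left_mono) auto
    moreover have "real_of_int q * \<bar>\<alpha> - of_int (-p) / of_int q\<bar> = \<bar>real_of_int p + real_of_int q * \<alpha>\<bar>"
    proof -
      have "real_of_int q * \<bar>\<alpha> - of_int (-p) / of_int q\<bar> = \<bar>real_of_int q * (\<alpha> - of_int (-p) / of_int q)\<bar>"
        using qr by (simp add: abs_mult)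
      also have "real_of_int q * (\<alpha> - of_int (-p) / of_int q) = real_of_int p + real_of_int q * \<alpha>"
        using qr by (simp add: field_simps)
      finally show ?thesis .
    qed
    moreover have "real_of_int q * (\<epsilon> * (of_int q) powr (- \<mu>)) = \<epsilon> * (of_int q) powr (1 - \<mu>)"
      using qr powr_mult_base[of "real_of_int q" "- \<mu>"] by (simp add: algebra_simps)
    moreover have "(of_int q) powr (1 - \<mu>) \<ge> real n powr (1 - \<mu>)"
      using q assms(2) by (intro powr_mono2') auto
    moreover have "\<epsilon> \<ge> e" "e > 0" using \<epsilon> by (auto simp: e_def)
    moreover have "real n powr (1 - \<mu>) \<ge> 0" by simp
    ultimately show ?thesis
      by (smt (verit, best) mult_mono)
  qed
  show ?thesis
  proof (rule that)
    show "0 < e" "e \<le> 1" using \<epsilon> by (auto simp: e_def)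
    fix n p q assume q: "1 \<le> \<bar>q\<bar>" "\<bar>q\<bar> \<le> int n"
    show "\<bar>real_of_int p + real_of_int q * \<alpha>\<bar> \<ge> e * real n powr (1 - \<mu>)"
    proof (cases "q \<ge> 1")
      case True
      then show ?thesis using pos q by simp
    next
      case False
      then have "-q \<ge> 1" "-q \<le> int n" using q by auto
      then have "\<bar>real_of_int (-p) + real_of_int (-q) * \<alpha>\<bar> \<ge> e * real n powr (1 - \<mu>)" by (rule pos)
      then show ?thesis by (simp add: abs_minus_commute)
    qed
  qed
qed

lemma norm_lam_diff:
  "norm (lam \<alpha> p - lam \<alpha> q)
     = \<bar>(real (fst p) - real (fst q)) + (real (snd p) - real (snd q)) * \<alpha>\<bar>"
proof -
  have "lam \<alpha> p - lam \<alpha> q = complex_of_real ((real (fst p) - real (fst q)) + (real (snd p) - real (snd q)) * \<alpha>)"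
    by (simp add: lam_def algebra_simps)
  then show ?thesis by (simp only: norm_of_real)
qed

lemma row_lower:
  fixes \<alpha> \<delta> :: real
  assumes d0: "0 < \<delta>" "\<delta> \<le> 1"
    and hyp: "\<And>p q::int. 1 \<le> \<bar>q\<bar> \<Longrightarrow> \<bar>q\<bar> \<le> int n \<Longrightarrow> \<bar>real_of_int p + real_of_int q * \<alpha>\<bar> \<ge> \<delta>"
    and p0: "p0 \<in> Iset n" and j: "j \<le> n"
  shows "(\<Prod>i\<in>{..n-j} - (if j = snd p0 then {fst p0} else {}). norm (lam \<alpha> p0 - lam \<alpha> (i, j)))
           \<ge> \<delta> * (fact (n - j) / 4 ^ (n - j))"
proof -
  define G where "G i = norm (lam \<alpha> p0 - lam \<alpha> (i, j))" for i
  have tri: "\<bar>real i - real i'\<bar> \<le> G i + G i'" for i i'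
  proof -
    have "\<bar>real i - real i'\<bar> = norm ((lam \<alpha> p0 - lam \<alpha> (i', j)) - (lam \<alpha> p0 - lam \<alpha> (i, j)))"
      by (subst norm_lam_diff[of _ "(i,j)" "(i',j)", simplified, symmetric]) (simp add: algebra_simps)
    also have "\<dots> \<le> G i' + G i" unfolding G_def by (rule norm_triangle_ineq4)
    finally show ?thesis by simp
  qed
  have Gnn: "G i \<ge> 0" for i by (simp add: G_def)
  have F: "fact (n - j) / 4 ^ (n - j) \<ge> (0::real)" by simp
  show ?thesis
  proof (cases "j = snd p0")
    case True
    have i0: "fst p0 \<le> n - j" using p0 True by (simp add: mem_Iset)
    have "(\<Prod>i\<in>{..n-j} - {fst p0}. G i) \<ge> fact (n - j) / 4 ^ (n - j)"
    proof (rule row_prod[OF i0])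
      fix i assume "i \<le> n - j" "i \<noteq> fst p0"
      have "(fst p0, j) = p0" using True by simp
      then have "G (fst p0) = 0" by (simp add: G_def)
      then have h: "\<bar>real i - real (fst p0)\<bar> \<le> G i" using tri[of i "fst p0"] by simp
      have "\<bar>real i - real (fst p0)\<bar> / 2 \<le> \<bar>real i - real (fst p0)\<bar>" by simp
      then show "\<bar>real i - real (fst p0)\<bar> / 2 \<le> G i" using h by (rule order_trans)
    qed
    moreover have "\<delta> * (fact (n - j) / 4 ^ (n - j)) \<le> fact (n - j) / 4 ^ (n - j)"
      by (rule mult_left_le_one_le[OF F]) (use d0 in auto)
    ultimately show ?thesis using True by (simp add: G_def)
  next
    case False
    define S where "S = {..n-j}"
    have Sf: "finite S" "S \<noteq> {}" by (auto simp: S_def)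
    have "Min (G ` S) \<in> G ` S" using Sf by (intro Min_in) auto
    then obtain i0 where i0S: "i0 \<in> S" and i0m: "G i0 = Min (G ` S)" by auto
    have i0: "i0 \<in> S" "\<And>i. i \<in> S \<Longrightarrow> G i0 \<le> G i"
      using i0S apply simp
      unfolding i0m using Sf by (intro Min_le) auto
    have Gi0: "G i0 \<ge> \<delta>"
    proof -
      have "G i0 = \<bar>real_of_int (int (fst p0) - int i0) + real_of_int (int (snd p0) - int j) * \<alpha>\<bar>"
        unfolding G_def norm_lam_diff by simp
      moreover have "1 \<le> \<bar>int (snd p0) - int j\<bar>" using False by auto
      moreover have "\<bar>int (snd p0) - int j\<bar> \<le> int n" using p0 j by (auto simp: mem_Iset)
      ultimately show ?thesis using hyp[of "int (snd p0) - int j" "int (fst p0) - int i0"] by simp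
    qed
    have "(\<Prod>i\<in>S. G i) = G i0 * (\<Prod>i\<in>S - {i0}. G i)"
      using Sf i0 by (simp add: prod.remove)
    moreover have "(\<Prod>i\<in>S - {i0}. G i) \<ge> fact (n - j) / 4 ^ (n - j)"
      unfolding S_def
    proof (rule row_prod)
      show "i0 \<le> n - j" using i0 by (simp add: S_def)
      fix i assume "i \<le> n - j" "i \<noteq> i0"
      then have "G i0 \<le> G i" using i0 by (simp add: S_def)
      then have "\<bar>real i - real i0\<bar> \<le> 2 * G i" using tri[of i i0] by simp
      then show "\<bar>real i - real i0\<bar> / 2 \<le> G i" by simp
    qed
    moreover have "\<delta> * (fact (n - j) / 4 ^ (n - j)) \<le> G i0 * (\<Prod>i\<in>S - {i0}. G i)"
      by (rule mult_mono) (use Gi0 calculation(2) d0 Gnn in auto)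
    ultimately have "(\<Prod>i\<in>S. G i) \<ge> \<delta> * (fact (n - j) / 4 ^ (n - j))"
      by simp
    then show ?thesis using False by (simp add: G_def S_def)
  qed
qed

lemma prod_lower:
  fixes \<alpha> \<delta> :: real
  assumes d0: "0 < \<delta>" "\<delta> \<le> 1"
    and hyp: "\<And>p q::int. 1 \<le> \<bar>q\<bar> \<Longrightarrow> \<bar>q\<bar> \<le> int n \<Longrightarrow> \<bar>real_of_int p + real_of_int q * \<alpha>\<bar> \<ge> \<delta>"
    and p0: "p0 \<in> Iset n"
  shows "(\<Prod>q\<in>Iset n - {p0}. norm (lam \<alpha> p0 - lam \<alpha> q))
           \<ge> (\<Prod>j\<le>n. \<delta> * (fact (n - j) / 4 ^ (n - j)))"
proof -
  define R where "R j = {..n-j} - (if j = snd p0 then {fst p0} else {})" for j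
  define F where "F q = norm (lam \<alpha> p0 - lam \<alpha> q)" for q
  have eqset: "Iset n - {p0} = (\<lambda>(j,i). (i,j)) ` (SIGMA j:{..n}. R j)"
  proof (rule set_eqI)
    fix q :: "nat \<times> nat"
    obtain a b where q: "q = (a, b)" by (cases q)
    show "q \<in> Iset n - {p0} \<longleftrightarrow> q \<in> (\<lambda>(j,i). (i,j)) ` (SIGMA j:{..n}. R j)"
    proof
      assume "q \<in> Iset n - {p0}"
      then have "(b, a) \<in> (SIGMA j:{..n}. R j)" using q by (auto simp: mem_Iset R_def)
      then show "q \<in> (\<lambda>(j,i). (i,j)) ` (SIGMA j:{..n}. R j)" using q by force
    next
      assume "q \<in> (\<lambda>(j,i). (i,j)) ` (SIGMA j:{..n}. R j)"
      then show "q \<in> Iset n - {p0}" using q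
        by (cases p0) (auto simp: mem_Iset R_def split: if_splits)
    qed
  qed
  have inj: "inj_on (\<lambda>(j,i). (i::nat, j::nat)) (SIGMA j:{..n}. R j)"
    by (auto simp: inj_on_def)
  have "(\<Prod>q\<in>Iset n - {p0}. F q) = (\<Prod>x\<in>(SIGMA j:{..n}. R j). F ((\<lambda>(j,i). (i,j)) x))"
    unfolding eqset using prod.reindex[OF inj, of F] by (simp add: comp_def)
  also have "\<dots> = (\<Prod>j\<le>n. \<Prod>i\<in>R j. F (i, j))"
    by (subst prod.Sigma) (auto simp: R_def split_def)
  also have "\<dots> \<ge> (\<Prod>j\<le>n. \<delta> * (fact (n - j) / 4 ^ (n - j)))"
  proof (rule prod_mono)
    fix j assume j: "j \<in> {..n}"
    show "0 \<le> \<delta> * (fact (n - j) / 4 ^ (n - j)) \<and> \<delta> * (fact (n - j) / 4 ^ (n - j)) \<le> (\<Prod>i\<in>R j. F (i, j))"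
      using row_lower[OF d0 hyp p0, of j] j d0 by (auto simp: R_def F_def)
  qed
  finally show ?thesis by (simp add: F_def)
qed

definition Dn :: "real \<Rightarrow> nat \<Rightarrow> real" where
  "Dn \<delta> n = (\<Prod>j\<le>n. \<delta> * (fact (n - j) / 4 ^ (n - j)))"

lemma Dn_pos: "0 < \<delta> \<Longrightarrow> 0 < Dn \<delta> n"
  by (simp add: Dn_def prod_pos)

lemma normK_pointwise:
  assumes "0 < \<alpha>" "\<alpha> < 1" "norm \<zeta> \<le> 1"
  shows "norm (poly2 n c (exp \<zeta>) (exp (complex_of_real \<alpha> * \<zeta>))) \<le> normK \<alpha> n c"
proof -
  have bd: "norm (poly2 n c (exp z) (exp (complex_of_real \<alpha> * z)))
      \<le> (\<Sum>p\<in>Iset n. norm (c (fst p) (snd p))) * exp (real n)" if z: "z \<in> cball 0 1" for z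
  proof -
    have "norm (poly2 n c (exp z) (exp (complex_of_real \<alpha> * z)))
        \<le> (\<Sum>p\<in>Iset n. norm (c (fst p) (snd p) * exp (lam \<alpha> p * z)))"
      unfolding poly2_exp by (rule norm_sum)
    also have "\<dots> \<le> (\<Sum>p\<in>Iset n. norm (c (fst p) (snd p)) * exp (real n))"
    proof (rule sum_mono)
      fix p assume p: "p \<in> Iset n"
      have "norm (lam \<alpha> p * z) \<le> real n"
        using norm_lam[OF assms(1,2) p] z
        by (simp add: norm_mult) (metis mult_le_one norm_ge_zero mult_mono' mult.commute mult_1_right order_trans)
      then have "norm (exp (lam \<alpha> p * z)) \<le> exp (real n)"
        using norm_exp order_trans by fastforce
      then show "norm (c (fst p) (snd p) * exp (lam \<alpha> p * z)) \<le> norm (c (fst p) (snd p)) * exp (real n)"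
        unfolding norm_mult by (rule mult_left_mono) simp
    qed
    also have "\<dots> = (\<Sum>p\<in>Iset n. norm (c (fst p) (snd p))) * exp (real n)"
      by (simp add: sum_distrib_right)
    finally show ?thesis .
  qed
  show ?thesis unfolding normK_def
    by (rule cSUP_upper) (use assms(3) bd in \<open>auto intro!: bdd_aboveI2\<close>)
qed

lemma upper_each:
  fixes \<alpha> \<delta> :: real
  assumes a: "0 < \<alpha>" "\<alpha> < 1" and d0: "0 < \<delta>" "\<delta> \<le> 1"
    and hyp: "\<And>p q::int. 1 \<le> \<bar>q\<bar> \<Longrightarrow> \<bar>q\<bar> \<le> int n \<Longrightarrow> \<bar>real_of_int p + real_of_int q * \<alpha>\<bar> \<ge> \<delta>"
    and cK: "normK \<alpha> n c \<le> 1"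
  shows "normBidisk n c \<le> real (card (Iset n)) ^ 2 * fact (card (Iset n) - 1) * exp (real n) / Dn \<delta> n"
proof -
  define I where "I = Iset n"
  define d where "d p = c (fst p) (snd p)" for p
  define l where "l = lam \<alpha>"
  define T where "T = real (card I) * fact (card I - 1) * exp (real n)"
  have fI: "finite I" by (simp add: I_def)
  have lR: "\<forall>p\<in>I. norm (l p) \<le> real n" using norm_lam[OF a] by (simp add: I_def l_def)
  have bd: "norm (\<Sum>p\<in>I. d p * exp (l p * \<zeta>)) \<le> 1" if "norm \<zeta> \<le> 1" for \<zeta>
    using normK_pointwise[OF a that, of n c] cK unfolding poly2_exp I_def d_def l_def by simp
  have a1: "norm (\<Sum>p\<in>I. d p * l p ^ t / fact t) \<le> 1" for t
    by (rule cauchy_coeff[OF fI lR _ bd]) simp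
  have Dpos: "Dn \<delta> n > 0" by (rule Dn_pos[OF d0(1)])
  have cb: "norm (d p0) \<le> T / Dn \<delta> n" if p0: "p0 \<in> I" for p0
  proof -
    have e: "norm (d p0 * (\<Prod>q\<in>I-{p0}. l p0 - l q)) \<le> T"
      unfolding T_def by (rule coeff_extract[OF fI p0 lR _ a1]) simp
    have pl: "(\<Prod>q\<in>I-{p0}. norm (l p0 - l q)) \<ge> Dn \<delta> n"
      using prod_lower[OF d0 hyp p0[unfolded I_def]] unfolding Dn_def I_def l_def by auto
    have "norm (d p0) * Dn \<delta> n \<le> norm (d p0) * (\<Prod>q\<in>I-{p0}. norm (l p0 - l q))"
      using pl by (intro mult_left_mono) auto
    also have "\<dots> = norm (d p0 * (\<Prod>q\<in>I-{p0}. l p0 - l q))"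
      by (simp add: norm_mult prod_norm)
    finally have "norm (d p0) * Dn \<delta> n \<le> T" using e by linarith
    then show ?thesis using Dpos by (simp add: field_simps)
  qed
  have "normBidisk n c \<le> (\<Sum>p\<in>I. norm (d p))"
    unfolding normBidisk_def
  proof (rule cSUP_least)
    show "cball 0 1 \<times> cball 0 1 \<noteq> {}" by auto
    fix zw :: "complex \<times> complex" assume "zw \<in> cball 0 1 \<times> cball 0 1"
    then show "norm (poly2 n c (fst zw) (snd zw)) \<le> (\<Sum>p\<in>I. norm (d p))"
      using poly2_bidisk_bound[of "fst zw" "snd zw" n c] by (auto simp: I_def d_def)
  qed
  also have "\<dots> \<le> (\<Sum>p\<in>I. T / Dn \<delta> n)" by (rule sum_mono) (rule cb)
  also have "\<dots> = real (card I) * (T / Dn \<delta> n)" by simp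
  also have "\<dots> = real (card (Iset n)) ^ 2 * fact (card (Iset n) - 1) * exp (real n) / Dn \<delta> n"
    by (simp add: T_def I_def power2_eq_square)
  finally show ?thesis .
qed

lemma shifted_sum_le_exp:
  fixes x :: real assumes x: "0 \<le> x"
  shows "(\<Sum>s\<le>K. fact N * real (s choose N) * x ^ (s - N) / fact s) \<le> exp x"
proof -
  have trm: "fact N * real (s choose N) * x ^ (s - N) / fact s = (if N \<le> s then x ^ (s - N) / fact (s - N) else 0)" for s
  proof (cases "N \<le> s")
    case True
    have "fact N * fact (s - N) * real (s choose N) = (fact s :: real)"
      using binomial_fact_lemma[OF True] by (metis of_nat_fact of_nat_mult)
    then show ?thesis using True by (simp add: field_simps)
  next
    case False
    then show ?thesis by (simp add: binomial_eq_0)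
  qed
  show ?thesis
  proof (cases "N \<le> K")
    case False
    have "(\<Sum>s\<le>K. fact N * real (s choose N) * x ^ (s - N) / fact s) = 0"
      using False by (auto simp: trm intro!: sum.neutral)
    then show ?thesis by simp
  next
    case True
    have "(\<Sum>s\<le>K. fact N * real (s choose N) * x ^ (s - N) / fact s)
        = (\<Sum>s\<le>K. if N \<le> s then x ^ (s - N) / fact (s - N) else 0)"
      by (simp add: trm)
    also have "\<dots> = (\<Sum>s\<in>{N..K}. x ^ (s - N) / fact (s - N))"
      by (rule sum.mono_neutral_cong_right) auto
    also have "\<dots> = (\<Sum>s\<in>{0 + N..(K - N) + N}. x ^ (s - N) / fact (s - N))"
      using True by simp
    also have "\<dots> = (\<Sum>u\<in>{0..K - N}. x ^ u / fact u)"
      by (subst sum.shift_bounds_cl_nat_ivl) simp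
    also have "\<dots> \<le> exp x" using exp_partial_le[OF x, of "K - N"] by (simp add: atLeast0AtMost)
    finally show ?thesis .
  qed
qed

lemma lower_construct:
  fixes \<alpha> :: real
  assumes a: "0 < \<alpha>" "\<alpha> < 1" and inj: "inj_on (lam \<alpha>) (Iset n)" and n1: "n \<ge> 1"
  obtains c where "normK \<alpha> n c \<le> 1"
    "norm (c 0 0) \<ge> fact (card (Iset n) - 1) / (exp (real n) * real n ^ (card (Iset n) - 1))"
proof -
  define I where "I = Iset n"
  define l where "l = lam \<alpha>"
  define N where "N = card I - 1"
  define k where "k = fact N / exp (real n)"
  define d where "d p = complex_of_real k / (\<Prod>q\<in>I-{p}. l p - l q)" for p
  define c where "c i j = d (i, j)" for i j
  have fI: "finite I" and I0: "(0,0) \<in> I" by (auto simp: I_def mem_Iset)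
  have Ine: "I \<noteq> {}" using I0 by auto
  have injI: "inj_on l I" using inj by (simp add: I_def l_def)
  have lR: "\<forall>p\<in>I. norm (l p) \<le> real n" using norm_lam[OF a] by (simp add: I_def l_def)
  have k0: "k \<ge> 0" by (simp add: k_def)
  have aeq: "(\<Sum>p\<in>I. d p * l p ^ s / fact s) = complex_of_real k * Sdd l I s / fact s" for s
    by (simp add: d_def Sdd_def sum_distrib_left sum_divide_distrib)
  have an: "norm (\<Sum>p\<in>I. d p * l p ^ s / fact s) \<le> (fact N * real (s choose N) * real n ^ (s - N) / fact s) / exp (real n)" for s
  proof -
    have "norm (Sdd l I s) \<le> real (s choose N) * real n ^ (s - N)"
      unfolding N_def by (rule Sdd_bound[OF fI Ine injI lR]) simp
    then have "k * norm (Sdd l I s) / fact s \<le> k * (real (s choose N) * real n ^ (s - N)) / fact s"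
      using k0 by (intro divide_right_mono mult_left_mono) auto
    moreover have "norm (\<Sum>p\<in>I. d p * l p ^ s / fact s) = k * norm (Sdd l I s) / fact s"
      unfolding aeq using k0 by (simp add: norm_mult norm_divide)
    ultimately show ?thesis by (simp add: k_def field_simps)
  qed
  have fb: "norm (\<Sum>p\<in>I. d p * exp (l p * \<zeta>)) \<le> 1" if z: "norm \<zeta> \<le> 1" for \<zeta>
  proof -
    define \<rho> where "\<rho> K = (\<Sum>p\<in>I. norm (d p)) * (exp (real n) * real n ^ Suc K / fact K)" for K
    have key: "norm (\<Sum>p\<in>I. d p * exp (l p * \<zeta>)) \<le> 1 + \<rho> K" for K
    proof -
      have t: "norm ((\<Sum>p\<in>I. d p * exp (l p * \<zeta>)) - (\<Sum>s\<le>K. (\<Sum>p\<in>I. d p * l p ^ s / fact s) * \<zeta> ^ s)) \<le> \<rho> K"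
        unfolding \<rho>_def by (rule taylor_sum[OF fI lR z])
      have "norm (\<Sum>s\<le>K. (\<Sum>p\<in>I. d p * l p ^ s / fact s) * \<zeta> ^ s)
          \<le> (\<Sum>s\<le>K. norm ((\<Sum>p\<in>I. d p * l p ^ s / fact s) * \<zeta> ^ s))" by (rule norm_sum)
      also have "\<dots> \<le> (\<Sum>s\<le>K. (fact N * real (s choose N) * real n ^ (s - N) / fact s) / exp (real n))"
      proof (rule sum_mono)
        fix s
        have "norm (\<zeta> ^ s) \<le> 1" using z by (simp add: norm_power power_le_one)
        then have "norm ((\<Sum>p\<in>I. d p * l p ^ s / fact s) * \<zeta> ^ s) \<le> norm (\<Sum>p\<in>I. d p * l p ^ s / fact s)"
          unfolding norm_mult by (simp add: mult_left_le)
        also have "\<dots> \<le> (fact N * real (s choose N) * real n ^ (s - N) / fact s) / exp (real n)" by (rule an)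
        finally show "norm ((\<Sum>p\<in>I. d p * l p ^ s / fact s) * \<zeta> ^ s) \<le> (fact N * real (s choose N) * real n ^ (s - N) / fact s) / exp (real n)" .
      qed
      also have "\<dots> = (\<Sum>s\<le>K. fact N * real (s choose N) * real n ^ (s - N) / fact s) / exp (real n)"
        by (simp add: sum_divide_distrib)
      also have "\<dots> \<le> exp (real n) / exp (real n)"
        by (intro divide_right_mono shifted_sum_le_exp) auto
      also have "\<dots> = 1" by simp
      finally have P: "norm (\<Sum>s\<le>K. (\<Sum>p\<in>I. d p * l p ^ s / fact s) * \<zeta> ^ s) \<le> 1" .
      show ?thesis using t P norm_triangle_ineq2[of "\<Sum>p\<in>I. d p * exp (l p * \<zeta>)" "\<Sum>s\<le>K. (\<Sum>p\<in>I. d p * l p ^ s / fact s) * \<zeta> ^ s"]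
        by linarith
    qed
    have lim: "(\<lambda>K. 1 + \<rho> K) \<longlonglongrightarrow> 1 + 0"
    proof (rule tendsto_add[OF tendsto_const])
      define D where "D = (\<Sum>p\<in>I. norm (d p))"
      have "(\<lambda>K. (D * exp (real n) * real n) * (real n ^ K / fact K)) \<longlonglongrightarrow> (D * exp (real n) * real n) * 0"
        by (intro tendsto_mult tendsto_const pow_fact_tendsto_0)
      moreover have "\<rho> = (\<lambda>K. (D * exp (real n) * real n) * (real n ^ K / fact K))"
        by (simp add: \<rho>_def D_def fun_eq_iff)
      ultimately show "\<rho> \<longlonglongrightarrow> 0" by simp
    qed
    have "norm (\<Sum>p\<in>I. d p * exp (l p * \<zeta>)) \<le> 1 + 0"
      by (rule LIMSEQ_le_const[OF lim]) (use key in blast)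
    then show ?thesis by simp
  qed
  have nK: "normK \<alpha> n c \<le> 1"
    unfolding normK_def
  proof (rule cSUP_least)
    show "cball (0::complex) 1 \<noteq> {}" by auto
    fix z :: complex assume "z \<in> cball 0 1"
    then have "norm z \<le> 1" by simp
    then show "norm (poly2 n c (exp z) (exp (complex_of_real \<alpha> * z))) \<le> 1"
      using fb unfolding poly2_exp by (simp add: c_def d_def I_def l_def)
  qed
  have c00: "norm (c 0 0) \<ge> fact N / (exp (real n) * real n ^ N)"
  proof -
    have l0: "l (0, 0) = 0" by (simp add: l_def lam_def)
    define P where "P = (\<Prod>q\<in>I-{(0,0)}. l (0,0) - l q)"
    have Pnz: "P \<noteq> 0"
      unfolding P_def using injI I0 fI by (auto simp: inj_on_def)
    have "norm P = (\<Prod>q\<in>I-{(0,0)}. norm (l (0,0) - l q))" by (simp add: P_def prod_norm)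
    also have "\<dots> \<le> real n ^ N"
    proof (rule prod_le_power)
      fix q assume "q \<in> I - {(0,0)}"
      then show "0 \<le> norm (l (0,0) - l q) \<and> norm (l (0,0) - l q) \<le> real n" using lR l0 by auto
    next
      show "card (I - {(0,0)}) \<le> N" using I0 fI by (simp add: N_def)
      show "1 \<le> real n" using n1 by simp
    qed
    finally have Pn: "norm P \<le> real n ^ N" .
    have "norm (c 0 0) = k / norm P" using k0 by (simp add: c_def d_def P_def norm_divide)
    moreover have "k / norm P \<ge> k / real n ^ N"
      using Pnz Pn k0 n1 by (intro divide_left_mono) auto
    ultimately show ?thesis by (simp add: k_def)
  qed
  show ?thesis using that[OF nK] c00 by (simp add: N_def I_def)
qed

lemma ln_fact_ge: "ln (fact L) \<ge> real L * ln (real L) - real L"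
proof (cases "L = 0")
  case True then show ?thesis by simp
next
  case False
  then have L0: "real L > 0" by simp
  have "real L ^ L / fact L \<le> exp (real L)" by (rule pow_div_fact_le_exp) simp
  then have "real L ^ L \<le> exp (real L) * fact L" by (simp add: field_simps)
  then have "ln (real L ^ L) \<le> ln (exp (real L) * fact L)"
    using L0 by (intro ln_mono) auto
  then show ?thesis using L0 by (simp add: ln_mult ln_realpow)
qed

lemma ln_fact_ge2:
  assumes "L \<le> n" "n \<ge> 1"
  shows "ln (fact L) \<ge> real L * ln (real n) - real n"
proof (cases "L = 0")
  case True then show ?thesis using assms by simp
next
  case False
  then have L0: "real L > 0" by simp
  have "ln (real n / real L) \<le> real n / real L - 1" using L0 assms by (intro ln_le_minus_one) auto
  then have "ln (real n) - ln (real L) \<le> real n / real L - 1" using L0 assms by (simp add: ln_div)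
  then have "real L * (ln (real n) - ln (real L)) \<le> real L * (real n / real L - 1)"
    using L0 by (intro mult_left_mono) auto
  then have "real L * ln (real n) - real L * ln (real L) \<le> real n - real L"
    using L0 by (simp add: algebra_simps)
  then show ?thesis using ln_fact_ge[of L] by linarith
qed

lemma ln_fact_le:
  assumes "N \<ge> 1" shows "ln (fact N) \<le> real N * ln (real N)"
proof -
  have "(fact N :: real) \<le> real N ^ N" using fact_le_power[of N] by (simp add: of_nat_power)
  then have "ln (fact N) \<le> ln (real N ^ N)" by (intro ln_mono) auto
  then show ?thesis using assms by (simp add: ln_realpow)
qed

lemma sum_rev_real: "(\<Sum>j\<le>n. real (n - j)) = real n * (real n + 1) / 2"
proof (induction n)
  case 0 then show ?case by simp
next
  case (Suc n)
  have "(\<Sum>j\<le>Suc n. real (Suc n - j)) = (\<Sum>j\<le>n. real (Suc n - j))" by simp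
  also have "\<dots> = (\<Sum>j\<le>n. real (n - j) + 1)"
    by (rule sum.cong) (auto simp: Suc_diff_le)
  also have "\<dots> = (\<Sum>j\<le>n. real (n - j)) + (real n + 1)" by (simp add: sum.distrib)
  finally show ?case using Suc by (simp add: field_simps)
qed

lemma ln_Dn_ge:
  assumes "\<delta> > 0" "n \<ge> 1"
  shows "ln (Dn \<delta> n) \<ge> (real n + 1) * (ln \<delta> - real n) + (ln (real n) - ln 4) * (real n * (real n + 1) / 2)"
proof -
  have "ln (Dn \<delta> n) = (\<Sum>j\<le>n. ln (\<delta> * (fact (n - j) / 4 ^ (n - j))))"
    unfolding Dn_def using assms by (subst ln_prod) auto
  also have "\<dots> = (\<Sum>j\<le>n. ln \<delta> + ln (fact (n - j)) - real (n - j) * ln 4)"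
    using assms by (intro sum.cong) (auto simp: ln_mult ln_div ln_realpow)
  also have "\<dots> \<ge> (\<Sum>j\<le>n. ln \<delta> + (real (n - j) * ln (real n) - real n) - real (n - j) * ln 4)"
  proof (rule sum_mono)
    fix j assume "j \<in> {..n}"
    have "ln (fact (n - j)) \<ge> real (n - j) * ln (real n) - real n"
      by (rule ln_fact_ge2) (use assms in auto)
    then show "ln \<delta> + (real (n - j) * ln (real n) - real n) - real (n - j) * ln 4
        \<le> ln \<delta> + ln (fact (n - j)) - real (n - j) * ln 4" by linarith
  qed
  moreover have "(\<Sum>j\<le>n. ln \<delta> + (real (n - j) * ln (real n) - real n) - real (n - j) * ln 4)
      = (real n + 1) * (ln \<delta> - real n) + (ln (real n) - ln 4) * (\<Sum>j\<le>n. real (n - j))"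
    by (simp add: sum.distrib sum_subtractf sum_distrib_left sum_distrib_right algebra_simps)
  ultimately show ?thesis unfolding sum_rev_real by linarith
qed

lemma ln_le_lin:
  fixes K x :: real assumes "K > 0" "x > 0"
  shows "ln x \<le> 6 * x / K + \<bar>ln (K / 6)\<bar>"
proof -
  have "ln (6 * x / K) \<le> 6 * x / K - 1" using assms by (intro ln_le_minus_one) auto
  moreover have "ln (6 * x / K) = ln x - ln (K / 6)" using assms
    by (simp add: ln_div ln_mult)
  ultimately show ?thesis by linarith
qed

lemma lin4: "(A::real) = 2*B + F + x - D \<Longrightarrow> B \<le> b \<Longrightarrow> F \<le> f \<Longrightarrow> g \<le> D \<Longrightarrow> A \<le> 2*b + f + x - g"
  by linarith

lemma upper_real:
  fixes e \<mu> :: real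
  assumes n1: "n \<ge> 1" and e: "0 < e" "e \<le> 1" and mu: "\<mu> \<ge> 2"
  defines "T \<equiv> card (Iset n)"
  defines "K \<equiv> 2 * \<mu> + 9 / 2"
  shows "ln (real T ^ 2 * fact (T - 1) * exp (real n) / Dn (e * real n powr (1 - \<mu>)) n)
     \<le> real n ^ 2 * ln (real n) / 2 + 9 * real n ^ 2 + (7 + K * \<bar>ln (K / 6)\<bar> + 2 * \<bar>ln e\<bar>) * real n"
proof -
  define x where "x = real n"
  define Lg where "Lg = ln x"
  define \<delta> where "\<delta> = e * real n powr (1 - \<mu>)"
  define N where "N = T - 1"
  have x1: "x \<ge> 1" using n1 by (simp add: x_def)
  have Lg0: "Lg \<ge> 0" using x1 by (simp add: Lg_def)
  have T2: "2 * real T = (x + 1) * (x + 2)"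
    using card_Iset[of n] unfolding T_def x_def by (metis of_nat_add of_nat_mult of_nat_numeral of_nat_1)
  have T1: "T \<ge> 1" using T2 x1 by (cases T) auto
  have N2: "2 * real N = x ^ 2 + 3 * x" using T2 T1 by (simp add: N_def of_nat_diff power2_eq_square algebra_simps)
  have hx1: "x \<le> x * x" using mult_right_mono[OF x1, of x] x1 by simp
  have hx: "x \<le> x * x" "1 \<le> x * x" using hx1 x1 by linarith+
  have "2 * real N \<ge> 4" using N2 hx x1 by (simp add: power2_eq_square)
  then have N1: "N \<ge> 1" by simp
  have d0: "\<delta> > 0" using e n1 by (simp add: \<delta>_def)
  have lnd: "ln \<delta> = ln e + (1 - \<mu>) * Lg"
    using e n1 by (simp add: \<delta>_def ln_mult ln_powr Lg_def x_def)
  have Dp: "Dn \<delta> n > 0" by (rule Dn_pos[OF d0])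
  have lnU: "ln (real T ^ 2 * fact N * exp (real n) / Dn \<delta> n) = 2 * ln (real T) + ln (fact N) + x - ln (Dn \<delta> n)"
    using T1 Dp by (simp add: ln_div ln_mult ln_realpow x_def)
  have l2: "ln (2::real) \<le> 25/36" by (rule ln2_le_25_over_36)
  have l3: "ln (3::real) \<le> 2 * ln 2"
  proof -
    have "ln (3::real) \<le> ln 4" by simp
    also have "ln (4::real) = 2 * ln 2" using ln_realpow[of 2 2] by simp
    finally show ?thesis .
  qed
  have l4: "ln (4::real) = 2 * ln 2" using ln_realpow[of 2 2] by simp
  have lT: "ln (real T) \<le> ln 3 + 2 * Lg"
  proof -
    have T2': "2 * real T = x * x + 3 * x + 2" using T2 by (simp add: algebra_simps)
    have "real T \<le> 3 * (x * x)" using T2' hx by linarith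
    then have "real T \<le> 3 * x ^ 2" by (simp add: power2_eq_square)
    then have "ln (real T) \<le> ln (3 * x ^ 2)" using T1 by (intro ln_mono) auto
    also have "\<dots> = ln 3 + 2 * Lg" using x1 by (simp add: ln_mult ln_realpow Lg_def)
    finally show ?thesis .
  qed
  have lN: "ln (fact N) \<le> real N * (ln 2 + 2 * Lg)"
  proof -
    have "real N \<le> 2 * (x * x)" using N2 hx by (simp add: power2_eq_square)
    then have "real N \<le> 2 * x ^ 2" by (simp add: power2_eq_square)
    then have "ln (real N) \<le> ln (2 * x ^ 2)" using N1 by (intro ln_mono) auto
    also have "\<dots> = ln 2 + 2 * Lg" using x1 by (simp add: ln_mult ln_realpow Lg_def)
    finally have "ln (real N) \<le> ln 2 + 2 * Lg" .
    then have "real N * ln (real N) \<le> real N * (ln 2 + 2 * Lg)" by (intro mult_left_mono) auto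
    then show ?thesis using ln_fact_le[OF N1] by linarith
  qed
  have lD: "ln (Dn \<delta> n) \<ge> (x + 1) * (ln \<delta> - x) + (Lg - ln 4) * (x * (x + 1) / 2)"
    using ln_Dn_ge[OF d0 n1] by (simp add: x_def Lg_def)
  have main: "ln (real T ^ 2 * fact N * exp (real n) / Dn \<delta> n)
      \<le> 2 * (ln 3 + 2 * Lg) + real N * (ln 2 + 2 * Lg) + x - ((x + 1) * (ln e + (1 - \<mu>) * Lg - x) + (Lg - ln 4) * (x * (x + 1) / 2))"
    by (rule lin4[OF lnU lT lN lD[unfolded lnd]])
  have ident: "2 * (ln 3 + 2 * Lg) + real N * (ln 2 + 2 * Lg) + x - ((x + 1) * (ln e + (1 - \<mu>) * Lg - x) + (Lg - ln 4) * (x * (x + 1) / 2))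
      = x ^ 2 * Lg / 2 + Lg * (5 * x / 2 + 4 + (x + 1) * (\<mu> - 1))
        + (2 * ln 3 + real N * ln 2 + x + x * (x + 1) + ln 4 * (x * (x + 1) / 2)) - (x + 1) * ln e"
  proof -
    have "real N = (x ^ 2 + 3 * x) / 2" using N2 by simp
    then show ?thesis by (simp add: algebra_simps power2_eq_square field_simps)
  qed
  have a: "Lg * (5 * x / 2 + 4 + (x + 1) * (\<mu> - 1)) \<le> K * x * Lg"
  proof -
    have "5 * x / 2 + 4 + (x + 1) * (\<mu> - 1) \<le> K * x"
    proof -
      have "(x + 1) * (\<mu> - 1) \<le> (2 * x) * (\<mu> - 1)" using x1 mu by (intro mult_right_mono) auto
      then show ?thesis using x1 by (simp add: K_def algebra_simps)
    qed
    then have "Lg * (5 * x / 2 + 4 + (x + 1) * (\<mu> - 1)) \<le> Lg * (K * x)" by (rule mult_left_mono[OF _ Lg0])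
    then show ?thesis by (simp add: mult_ac)
  qed
  have Kp: "K > 0" using mu by (simp add: K_def)
  have b: "K * x * Lg \<le> 6 * x ^ 2 + K * \<bar>ln (K / 6)\<bar> * x"
  proof -
    have "Lg \<le> 6 * x / K + \<bar>ln (K / 6)\<bar>" unfolding Lg_def using Kp x1 by (intro ln_le_lin) auto
    then have "K * x * Lg \<le> K * x * (6 * x / K + \<bar>ln (K / 6)\<bar>)" using Kp x1 by (intro mult_left_mono) auto
    also have "\<dots> = 6 * x ^ 2 + K * \<bar>ln (K / 6)\<bar> * x" using Kp by (simp add: field_simps power2_eq_square)
    finally show ?thesis .
  qed
  have c: "2 * ln 3 + real N * ln 2 + x + x * (x + 1) + ln 4 * (x * (x + 1) / 2) \<le> 3 * x ^ 2 + 7 * x"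
  proof -
    have l20: "ln (2::real) \<ge> 0" by simp
    have "real N * ln 2 \<le> real N * (25/36)" using l2 by (intro mult_left_mono) auto
    moreover have "ln 4 * (x * (x + 1) / 2) \<le> (50/36) * (x * (x + 1) / 2)"
      using l4 l2 x1 by (intro mult_right_mono) auto
    moreover have "2 * ln (3::real) \<le> 100/36" using l3 l2 by linarith
    moreover have "x * (x + 1) = x * x + x" by (simp add: algebra_simps)
    moreover have "2 * real N = x * x + 3 * x" using N2 by (simp add: power2_eq_square)
    ultimately have "2 * ln 3 + real N * ln 2 + x + x * (x + 1) + ln 4 * (x * (x + 1) / 2) \<le> 3 * (x * x) + 7 * x"
      using x1 hx by linarith
    then show ?thesis by (simp add: power2_eq_square)
  qed
  have d: "- (x + 1) * ln e \<le> 2 * \<bar>ln e\<bar> * x"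
  proof -
    have "ln e \<le> 0" using e by simp
    then have "- (x + 1) * ln e = (x + 1) * \<bar>ln e\<bar>" by (simp add: algebra_simps)
    also have "\<dots> \<le> (2 * x) * \<bar>ln e\<bar>" using x1 by (intro mult_right_mono) auto
    also have "\<dots> = 2 * \<bar>ln e\<bar> * x" by (simp add: mult_ac)
    finally show ?thesis .
  qed
  have "ln (real T ^ 2 * fact N * exp (real n) / Dn \<delta> n)
      \<le> x ^ 2 * Lg / 2 + 9 * x ^ 2 + (7 + K * \<bar>ln (K / 6)\<bar> + 2 * \<bar>ln e\<bar>) * x"
    using main ident a b c d by (simp add: algebra_simps)
  then show ?thesis by (simp add: x_def Lg_def N_def \<delta>_def)
qed

lemma exp2_ge7: "exp (2::real) \<ge> 7"
proof -
  have h: "\<bar>exp (1::real) - 5837465777 / 2147483648\<bar> \<le> 1 / 4294967296" using e_approx_32 by simp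
  have "exp (1::real) \<ge> 27/10" using h by linarith
  then have "exp (1::real) * exp 1 \<ge> (27/10) * (27/10)" by (intro mult_mono) auto
  moreover have "exp (2::real) = exp 1 * exp 1" by (simp flip: exp_add)
  ultimately show ?thesis by simp
qed

lemma lin_low: fixes u p q X x F :: real
 shows "u*(p-q-1) \<ge> (X/2)*(p-q-1) \<Longrightarrow> (X/2)*(1-q) \<ge> x \<Longrightarrow> F \<ge> u*(2*p-q) - u \<Longrightarrow> F - x - u*p \<ge> X*p/2 - X"
  unfolding right_diff_distrib left_diff_distrib by linarith

lemma lower_real:
  assumes n1: "n \<ge> 1" and big: "ln (real n) > 2"
  defines "T \<equiv> card (Iset n)"
  shows "ln (fact (T - 1) / (exp (real n) * real n ^ (T - 1))) \<ge> real n ^ 2 * ln (real n) / 2 - real n ^ 2"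
proof -
  define x where "x = real n"
  define Lg where "Lg = ln x"
  define N where "N = T - 1"
  have x1: "x \<ge> 1" using n1 by (simp add: x_def)
  have T2: "2 * real T = (x + 1) * (x + 2)"
    using card_Iset[of n] unfolding T_def x_def by (metis of_nat_add of_nat_mult of_nat_numeral of_nat_1)
  have T1: "T \<ge> 1" using T2 x1 by (cases T) auto
  have N2: "2 * real N = x * x + 3 * x" using T2 T1 by (simp add: N_def of_nat_diff algebra_simps)
  have hx1: "x \<le> x * x" using mult_right_mono[OF x1, of x] x1 by simp
  have Nx: "real N \<ge> x * x / 2" using N2 x1 by linarith
  have "real N > 0" using Nx hx1 x1 by linarith
  then have N1: "N \<ge> 1" by simp
  have x7: "x \<ge> 7"
  proof -
    have "exp (2::real) < exp Lg" using big by (simp add: Lg_def x_def)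
    also have "exp Lg = x" using x1 by (simp add: Lg_def)
    finally show ?thesis using exp2_ge7 by linarith
  qed
  have l2: "ln (2::real) \<le> 25/36" by (rule ln2_le_25_over_36)
  have lnN: "ln (real N) \<ge> 2 * Lg - ln 2"
  proof -
    have "ln (x * x / 2) \<le> ln (real N)" using Nx x1 by (intro ln_mono) auto
    moreover have "ln (x * x / 2) = 2 * Lg - ln 2" using x1 by (simp add: ln_div ln_mult Lg_def)
    ultimately show ?thesis by simp
  qed
  have lf: "ln (fact N) \<ge> real N * (2 * Lg - ln 2) - real N"
  proof -
    have "real N * (2 * Lg - ln 2) \<le> real N * ln (real N)" using lnN by (intro mult_left_mono) auto
    then show ?thesis using ln_fact_ge[of N] by linarith
  qed
  have eq: "ln (fact N / (exp (real n) * real n ^ N)) = ln (fact N) - x - real N * Lg"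
    using x1 by (simp add: ln_div ln_mult ln_realpow x_def Lg_def)
  have pos: "Lg - ln 2 - 1 \<ge> 0" using big l2 by (simp add: Lg_def x_def)
  have A1: "real N * (Lg - ln 2 - 1) \<ge> (x * x / 2) * (Lg - ln 2 - 1)"
    using Nx pos by (intro mult_right_mono) auto
  have A2: "(x * x / 2) * (1 - ln 2) \<ge> x"
  proof -
    have "x * (1 - ln 2) \<ge> 7 * (11/36)" using x7 l2 by (intro mult_mono) auto
    then have "x * (1 - ln 2) \<ge> 2" by simp
    then have "x * (x * (1 - ln 2)) \<ge> x * 2" using x1 by (intro mult_left_mono) auto
    then show ?thesis by (simp add: algebra_simps)
  qed
  have "ln (fact N) - x - real N * Lg \<ge> x * x * Lg / 2 - x * x"
    by (rule lin_low[OF A1 A2 lf])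
  then show ?thesis using eq by (simp add: N_def x_def Lg_def power2_eq_square)
qed

lemma normBidisk_ge00: "normBidisk n c \<ge> norm (c 0 0)"
proof -
  have "norm (poly2 n c (fst (0::complex, 0::complex)) (snd (0::complex, 0::complex))) \<le> normBidisk n c"
    unfolding normBidisk_def
    by (rule cSUP_upper) (auto intro!: bdd_aboveI2 poly2_bidisk_bound)
  then show ?thesis by (simp add: poly2_zero)
qed

lemma inner_delta: "(\<Sum>j\<le>m. (if j = 0 then 1 else 0) * (w::complex) ^ j) = 1"
proof -
  have "(\<Sum>j\<le>m. (if j = 0 then 1 else 0) * (w::complex) ^ j) = (\<Sum>j\<le>m. if j = 0 then 1 else 0)"
    by (rule sum.cong) auto
  then show ?thesis by simp
qed

lemma poly2_const1: "poly2 n (\<lambda>i j. if i = 0 \<and> j = 0 then 1 else 0) z w = 1"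
proof -
  have "poly2 n (\<lambda>i j. if i = 0 \<and> j = 0 then 1 else 0) z w
      = (\<Sum>i\<le>n. if i = 0 then (\<Sum>j\<le>n. if j = 0 then 1 else 0) else 0)"
    unfolding poly2_def by (rule sum.cong) (auto simp: inner_delta)
  also have "\<dots> = 1" by simp
  finally show ?thesis .
qed

lemma normK_const1: "normK \<alpha> n (\<lambda>i j. if i = 0 \<and> j = 0 then 1 else 0) = 1"
  unfolding normK_def poly2_const1 by simp

lemma normBidisk_const1: "normBidisk n (\<lambda>i j. if i = 0 \<and> j = 0 then 1 else 0) = 1"
  unfolding normBidisk_def poly2_const1 by simp

theorem corollary2:
  fixes \<alpha> \<mu> :: real
  assumes "0 < \<alpha>" "\<alpha> < 1" "\<mu> \<ge> 2" "diophantine_of_order \<alpha> \<mu>"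
  shows "\<exists>C>0. \<forall>n::nat. n \<ge> 1 \<longrightarrow>
           real n ^ 2 * ln (real n) / 2 - real n ^ 2 \<le> e_n n \<alpha> \<and>
           e_n n \<alpha> \<le> real n ^ 2 * ln (real n) / 2 + 9 * real n ^ 2 + C * real n"
proof -
  have mu1: "\<mu> \<ge> 1" using assms(3) by simp
  obtain e where e: "0 < e" "e \<le> 1"
    and dio: "\<And>n p q. 1 \<le> \<bar>q\<bar> \<Longrightarrow> \<bar>q\<bar> \<le> int n \<Longrightarrow>
        \<bar>real_of_int p + real_of_int q * \<alpha>\<bar> \<ge> e * real n powr (1 - \<mu>)"
    using dioph_bound[OF assms(4) mu1] by blast
  define K where "K = 2 * \<mu> + 9 / 2"
  define C where "C = 7 + K * \<bar>ln (K / 6)\<bar> + 2 * \<bar>ln e\<bar>"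
  have "K > 0" using assms(3) by (simp add: K_def)
  then have "K * \<bar>ln (K / 6)\<bar> \<ge> 0" by simp
  then have Cpos: "C > 0" unfolding C_def by simp
  show ?thesis
  proof (rule exI[of _ C], rule conjI[OF Cpos], intro allI impI)
    fix n :: nat assume n1: "n \<ge> 1"
    define \<delta> where "\<delta> = e * real n powr (1 - \<mu>)"
    have d0: "0 < \<delta>" using e n1 by (simp add: \<delta>_def)
    have d1: "\<delta> \<le> 1"
    proof -
      have "real n powr (1 - \<mu>) \<le> real n powr 0" using n1 assms(3) by (intro powr_mono) auto
      then have "real n powr (1 - \<mu>) \<le> 1" using n1 by simp
      then show ?thesis unfolding \<delta>_def using e by (metis mult_le_one powr_ge_zero less_imp_le)
    qed
    have hyp: "\<And>p q::int. 1 \<le> \<bar>q\<bar> \<Longrightarrow> \<bar>q\<bar> \<le> int n \<Longrightarrow> \<bar>real_of_int p + real_of_int q * \<alpha>\<bar> \<ge> \<delta>"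
      unfolding \<delta>_def by (rule dio)
    have inj: "inj_on (lam \<alpha>) (Iset n)"
    proof (rule inj_onI)
      fix p q assume p: "p \<in> Iset n" and q: "q \<in> Iset n" and eq: "lam \<alpha> p = lam \<alpha> q"
      have z: "\<bar>(real (fst p) - real (fst q)) + (real (snd p) - real (snd q)) * \<alpha>\<bar> = 0"
        using norm_lam_diff[of \<alpha> p q] eq by simp
      show "p = q"
      proof (cases "snd p = snd q")
        case True
        then have "fst p = fst q" using z by simp
        then show ?thesis using True by (simp add: prod_eq_iff)
      next
        case False
        have "1 \<le> \<bar>int (snd p) - int (snd q)\<bar>" using False by auto
        moreover have "\<bar>int (snd p) - int (snd q)\<bar> \<le> int n" using p q by (auto simp: mem_Iset)
        ultimately have "\<bar>real_of_int (int (fst p) - int (fst q)) + real_of_int (int (snd p) - int (snd q)) * \<alpha>\<bar> \<ge> \<delta>"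
          by (rule hyp)
        then show ?thesis using z d0 by simp
      qed
    qed
    define T where "T = card (Iset n)"
    define U where "U = real T ^ 2 * fact (T - 1) * exp (real n) / Dn \<delta> n"
    define S where "S = {c. normK \<alpha> n c \<le> 1}"
    have upS: "\<And>c. c \<in> S \<Longrightarrow> normBidisk n c \<le> U"
      unfolding S_def U_def T_def using upper_each[OF assms(1,2) d0 d1 hyp] by blast
    have c1S: "(\<lambda>i j. if i = 0 \<and> j = 0 then 1 else 0) \<in> S" by (simp add: S_def normK_const1)
    have Sne: "S \<noteq> {}" using c1S by blast
    have bdd: "bdd_above (normBidisk n ` S)" using upS by (auto intro!: bdd_aboveI2)
    have EU: "E_n n \<alpha> \<le> U"
      unfolding E_n_def S_def[symmetric] by (rule cSUP_least[OF Sne upS])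
    have Ege: "E_n n \<alpha> \<ge> normBidisk n c" if "c \<in> S" for c
      unfolding E_n_def S_def[symmetric] by (rule cSUP_upper[OF that bdd])
    have E1: "E_n n \<alpha> \<ge> 1" using Ege[OF c1S] by (simp add: normBidisk_const1)
    have upper: "e_n n \<alpha> \<le> real n ^ 2 * ln (real n) / 2 + 9 * real n ^ 2 + C * real n"
    proof -
      have "e_n n \<alpha> \<le> ln U" unfolding e_n_def using E1 EU by (intro ln_mono) auto
      also have "ln U \<le> real n ^ 2 * ln (real n) / 2 + 9 * real n ^ 2 + C * real n"
        using upper_real[OF n1 e assms(3)] unfolding U_def T_def \<delta>_def C_def K_def by simp
      finally show ?thesis .
    qed
    have lower: "real n ^ 2 * ln (real n) / 2 - real n ^ 2 \<le> e_n n \<alpha>"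
    proof (cases "ln (real n) > 2")
      case False
      have "real n ^ 2 * ln (real n) / 2 - real n ^ 2 \<le> real n ^ 2 * 2 / 2 - real n ^ 2"
        using False by (intro diff_right_mono divide_right_mono mult_left_mono) auto
      also have "\<dots> = 0" by simp
      also have "0 \<le> e_n n \<alpha>" unfolding e_n_def using E1 by simp
      finally show ?thesis .
    next
      case True
      obtain c where cK: "normK \<alpha> n c \<le> 1"
        and c00: "norm (c 0 0) \<ge> fact (card (Iset n) - 1) / (exp (real n) * real n ^ (card (Iset n) - 1))"
        using lower_construct[OF assms(1,2) inj n1] by blast
      define V where "V = fact (T - 1) / (exp (real n) * real n ^ (T - 1))"
      have V0: "V > 0" using n1 by (simp add: V_def)
      have "V \<le> E_n n \<alpha>"
      proof -
        have "V \<le> norm (c 0 0)" using c00 by (simp add: V_def T_def)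
        also have "\<dots> \<le> normBidisk n c" by (rule normBidisk_ge00)
        also have "\<dots> \<le> E_n n \<alpha>" using Ege cK by (simp add: S_def)
        finally show ?thesis .
      qed
      then have "ln V \<le> e_n n \<alpha>" unfolding e_n_def using V0 by (intro ln_mono) auto
      moreover have "ln V \<ge> real n ^ 2 * ln (real n) / 2 - real n ^ 2"
        using lower_real[OF n1 True] by (simp add: V_def T_def)
      ultimately show ?thesis by linarith
    qed
    show "real n ^ 2 * ln (real n) / 2 - real n ^ 2 \<le> e_n n \<alpha> \<and>
           e_n n \<alpha> \<le> real n ^ 2 * ln (real n) / 2 + 9 * real n ^ 2 + C * real n"
      using lower upper by blast
  qed
qed

end
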